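(* Let $\mathcal{A}$ be a unital semiprime algebra over a field $F$ with $\operatorname{char}(F)\neq 2$. Then $\operatorname{GJDer}(\mathcal{A})=\operatorname{Cent}(\mathcal{A})+\operatorname{Der}(\mathcal{A})$.
   Context: $\mathcal{A}$ is semiprime if $a\mathcal{A}a=\{0\}$ implies $a=0$. For $x,y\in\mathcal{A}$ let $x\circ y=xy+yx$. $\operatorname{GJDer}(\mathcal{A})$ is the set of linear maps $f:\mathcal{A}\to\mathcal{A}$ for which there exist linear maps $g,h:\mathcal{A}\to\mathcal{A}$ with $f(x)\circ y+x\circ g(y)=h(x\circ y)$ for all $x,y\in\mathcal{A}$. $\operatorname{Cent}(\mathcal{A})$ is the set of linear maps $f$ with $f(xy)=f(x)y=xf(y)$ for all $x,y$ (centralizers). $\operatorname{Der}(\mathcal{A})$ is the set of derivations, i.e. linear $d$ with $d(xy)=d(x)y+xd(y)$. The sum of two sets of maps is the set of pointwise sums. *)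

theory Defs
  imports Main
begin

text \<open>An associative algebra over a field 'k: the carrier is a type of class ring
  (associative, not necessarily unital at the class level), with a scalar action sc.\<close>

definition is_algebra :: "('k::field \<Rightarrow> 'a::ring \<Rightarrow> 'a) \<Rightarrow> bool" where
  "is_algebra sc \<longleftrightarrow>
     (\<forall>c x y. sc c (x + y) = sc c x + sc c y) \<and>
     (\<forall>c d x. sc (c + d) x = sc c x + sc d x) \<and>
     (\<forall>c d x. sc (c * d) x = sc c (sc d x)) \<and>
     (\<forall>x. sc 1 x = x) \<and>
     (\<forall>c x y. sc c (x * y) = sc c x * y) \<and>
     (\<forall>c x y. sc c (x * y) = x * sc c y)"

definition unital :: "'a::ring itself \<Rightarrow> bool" where
  "unital _ \<longleftrightarrow> (\<exists>e::'a. \<forall>x. e * x = x \<and> x * e = x)"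

definition semiprime :: "'a::ring itself \<Rightarrow> bool" where
  "semiprime _ \<longleftrightarrow> (\<forall>a::'a. (\<forall>x. a * x * a = 0) \<longrightarrow> a = 0)"

definition is_linear :: "('k::field \<Rightarrow> 'a::ring \<Rightarrow> 'a) \<Rightarrow> ('a \<Rightarrow> 'a) \<Rightarrow> bool" where
  "is_linear sc f \<longleftrightarrow> (\<forall>x y. f (x + y) = f x + f y) \<and> (\<forall>c x. f (sc c x) = sc c (f x))"

definition jcirc :: "'a::ring \<Rightarrow> 'a \<Rightarrow> 'a" where
  "jcirc x y = x * y + y * x"

definition GJDer :: "('k::field \<Rightarrow> 'a::ring \<Rightarrow> 'a) \<Rightarrow> ('a \<Rightarrow> 'a) set" where
  "GJDer sc = {f. is_linear sc f \<and>
      (\<exists>g h. is_linear sc g \<and> is_linear sc h \<and>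
         (\<forall>x y. jcirc (f x) y + jcirc x (g y) = h (jcirc x y)))}"

definition Cent :: "('k::field \<Rightarrow> 'a::ring \<Rightarrow> 'a) \<Rightarrow> ('a \<Rightarrow> 'a) set" where
  "Cent sc = {f. is_linear sc f \<and> (\<forall>x y. f (x * y) = f x * y \<and> f (x * y) = x * f y)}"

definition Der :: "('k::field \<Rightarrow> 'a::ring \<Rightarrow> 'a) \<Rightarrow> ('a \<Rightarrow> 'a) set" where
  "Der sc = {d. is_linear sc d \<and> (\<forall>x y. d (x * y) = d x * y + x * d y)}"

definition map_setsum :: "('a \<Rightarrow> 'b::plus) set \<Rightarrow> ('a \<Rightarrow> 'b) set \<Rightarrow> ('a \<Rightarrow> 'b) set" where
  "map_setsum S T = {(\<lambda>x. f x + g x) | f g. f \<in> S \<and> g \<in> T}"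

end

theory Submission
  imports Defs
begin


lemma Jid:
  fixes p q r y :: "'a::ring"
  shows "jcirc (jcirc (jcirc p q) y) r + jcirc (jcirc (jcirc q r) y) p + jcirc (jcirc (jcirc r p) y) q
       = jcirc (jcirc p q) (jcirc y r) + jcirc (jcirc q r) (jcirc y p) + jcirc (jcirc r p) (jcirc y q)"
  unfolding jcirc_def by (simp add: algebra_simps)

definition dd :: "'a::ring \<Rightarrow> 'a \<Rightarrow> 'a" where "dd a z = z * a - a * z"
definition cm :: "'a::ring \<Rightarrow> 'a \<Rightarrow> 'a" where "cm p q = p * q - q * p"
definition I1 :: "'a::ring \<Rightarrow> 'a \<Rightarrow> 'a \<Rightarrow> 'a" where
  "I1 a x y = cm (dd a x) (dd a (dd a y)) + cm (dd a (dd a x)) (dd a y) + cm (dd a (dd a (dd a x))) y"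
definition C2 :: "'a::ring \<Rightarrow> 'a \<Rightarrow> 'a" where
  "C2 a x = cm x (dd a (dd a (dd a x))) + cm (dd a x) (dd a (dd a x))"

lemma constraint1:
  fixes F :: "'a::ring \<Rightarrow> 'a"
  assumes Fadd: "\<And>u v. F (u + v) = F u + F v"
    and Frel: "\<And>u v. F (jcirc u v) = jcirc (F u) v + jcirc u (F v) - jcirc (jcirc u v) a"
  shows "I1 a x y + I1 a x y = 0"
proof -
  let ?p = a and ?q = a and ?r = x
  have e: "F (jcirc (jcirc (jcirc ?p ?q) y) ?r) + F (jcirc (jcirc (jcirc ?q ?r) y) ?p) + F (jcirc (jcirc (jcirc ?r ?p) y) ?q)
       = F (jcirc (jcirc ?p ?q) (jcirc y ?r)) + F (jcirc (jcirc ?q ?r) (jcirc y ?p)) + F (jcirc (jcirc ?r ?p) (jcirc y ?q))"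
    using Jid[of ?p ?q y ?r] by (metis Fadd)
  have "I1 a x y + I1 a x y = (F (jcirc (jcirc ?p ?q) (jcirc y ?r)) + F (jcirc (jcirc ?q ?r) (jcirc y ?p)) + F (jcirc (jcirc ?r ?p) (jcirc y ?q)))
       - (F (jcirc (jcirc (jcirc ?p ?q) y) ?r) + F (jcirc (jcirc (jcirc ?q ?r) y) ?p) + F (jcirc (jcirc (jcirc ?r ?p) y) ?q))"
    unfolding Frel by (simp add: I1_def jcirc_def dd_def cm_def algebra_simps)
  with e show ?thesis by simp
qed

lemma constraint2:
  fixes F :: "'a::ring \<Rightarrow> 'a"
  assumes Fadd: "\<And>u v. F (u + v) = F u + F v"
    and Frel: "\<And>u v. F (jcirc u v) = jcirc (F u) v + jcirc u (F v) - jcirc (jcirc u v) a"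
  shows "(C2 a x + C2 a x) + (C2 a x + C2 a x) = 0"
proof -
  let ?p = a and ?q = x and ?r = x and ?y = a
  have e: "F (jcirc (jcirc (jcirc ?p ?q) ?y) ?r) + F (jcirc (jcirc (jcirc ?q ?r) ?y) ?p) + F (jcirc (jcirc (jcirc ?r ?p) ?y) ?q)
       = F (jcirc (jcirc ?p ?q) (jcirc ?y ?r)) + F (jcirc (jcirc ?q ?r) (jcirc ?y ?p)) + F (jcirc (jcirc ?r ?p) (jcirc ?y ?q))"
    using Jid[of ?p ?q ?y ?r] by (metis Fadd)
  have "(C2 a x + C2 a x) + (C2 a x + C2 a x) = (F (jcirc (jcirc (jcirc ?p ?q) ?y) ?r) + F (jcirc (jcirc (jcirc ?q ?r) ?y) ?p) + F (jcirc (jcirc (jcirc ?r ?p) ?y) ?q))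
      - (F (jcirc (jcirc ?p ?q) (jcirc ?y ?r)) + F (jcirc (jcirc ?q ?r) (jcirc ?y ?p)) + F (jcirc (jcirc ?r ?p) (jcirc ?y ?q)))"
    unfolding Frel by (simp add: C2_def jcirc_def dd_def cm_def algebra_simps)
  with e show ?thesis by simp
qed

lemma dd_add: "dd a (u + v) = dd a u + dd (a::'a::ring) v"
  by (simp add: dd_def algebra_simps)
lemma dd_mult: "dd a (u * v) = dd a u * v + u * dd (a::'a::ring) v"
  by (simp add: dd_def algebra_simps)

lemma a_central:
  fixes F :: "'a::ring \<Rightarrow> 'a"
  assumes sp: "\<And>u::'a. (\<And>x. u * x * u = 0) \<Longrightarrow> u = 0"
    and tf: "\<And>x::'a. x + x = 0 \<Longrightarrow> x = 0"
    and Fadd: "\<And>u v. F (u + v) = F u + F v"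
    and Frel: "\<And>u v. F (jcirc u v) = jcirc (F u) v + jcirc u (F v) - jcirc (jcirc u v) a"
  shows "x * a = a * x"
proof -
  have I1z: "\<And>x y. I1 a x y = 0" using constraint1[OF Fadd Frel] tf by blast
  have C2z: "\<And>x. C2 a x = 0" using constraint2[OF Fadd Frel] tf by blast
  have d4: "\<And>x. dd a (dd a (dd a (dd a x))) = 0"
  proof -
    fix x
    have "I1 a x a = dd a (dd a (dd a (dd a x)))"
      by (simp add: I1_def cm_def dd_def algebra_simps)
    with I1z show "dd a (dd a (dd a (dd a x))) = 0" by simp
  qed
  have I3: "\<And>x y. dd a (dd a y) * dd a (dd a x) + dd a y * dd a (dd a (dd a x)) = 0"
  proof -
    fix x y
    have "dd a (dd a y) * dd a (dd a x) + dd a y * dd a (dd a (dd a x))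
          = I1 a x (y*a) - I1 a x y * a - y * I1 a x a"
      by (simp add: I1_def cm_def dd_def algebra_simps)
    with I1z show "dd a (dd a y) * dd a (dd a x) + dd a y * dd a (dd a (dd a x)) = 0" by simp
  qed
  have I4: "\<And>x w. dd a (dd a x) * dd a (dd a w) + dd a (dd a (dd a x)) * dd a w = 0"
  proof -
    fix x w
    have "dd a (dd a x) * dd a (dd a w) + dd a (dd a (dd a x)) * dd a w
          = I1 a x (a*w) - I1 a x a * w - a * I1 a x w"
      by (simp add: I1_def cm_def dd_def algebra_simps)
    with I1z show "dd a (dd a x) * dd a (dd a w) + dd a (dd a (dd a x)) * dd a w = 0" by simp
  qed
  have d3: "\<And>x. dd a (dd a (dd a x)) = 0"
  proof -
    fix x
    define r where "r = dd a (dd a (dd a x))"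
    have r1: "\<And>w. r * dd a (dd a w) = 0"
      using I4[of "dd a x"] d4[of x] unfolding r_def by simp
    have r1': "\<And>w z. r * (dd a (dd a w) * z) = 0"
      using r1 by (metis mult.assoc mult_zero_left)
    have R1: "\<And>y z. r * (dd a y * dd a z) + r * (dd a y * dd a z) + r * (y * dd a (dd a z)) = 0"
    proof -
      fix y z
      have "r * (dd a y * dd a z) + r * (dd a y * dd a z) + r * (y * dd a (dd a z))
            = r * dd a (dd a (y * z)) - r * (dd a (dd a y) * z)"
        by (simp add: dd_mult dd_add algebra_simps)
      with r1 r1' show "r * (dd a y * dd a z) + r * (dd a y * dd a z) + r * (y * dd a (dd a z)) = 0"
        by simp
    qed
    have R2: "\<And>y z. r * (dd a y * dd a (dd a z)) = 0"
      using R1 r1' by (metis add_0)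
    have R3: "\<And>y z. r * (y * dd a (dd a (dd a z))) = 0"
      using R1 R2 by (metis add_0)
    have "\<And>y. r * y * r = 0" using R3[of _ x] unfolding r_def by (simp add: mult.assoc)
    then have "r = 0" by (rule sp)
    then show "dd a (dd a (dd a x)) = 0" by (simp add: r_def)
  qed
  have s2: "\<And>x y. dd a (dd a y) * dd a (dd a x) = 0"
    using I3 d3 by (metis add_0_right mult_zero_right)
  have C2': "\<And>x. cm (dd a x) (dd a (dd a x)) = 0"
    using C2z d3 by (simp add: C2_def cm_def)
  have L2: "\<And>x y. cm (dd a x) (dd a (dd a y)) = 0"
  proof -
    fix x y
    have e1: "cm (dd a x) (dd a (dd a y)) + cm (dd a (dd a x)) (dd a y) = 0"
      using I1z[of x y] d3[of x] by (simp add: I1_def cm_def)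
    have "cm (dd a x) (dd a (dd a y)) + cm (dd a x) (dd a (dd a y))
         = (cm (dd a x) (dd a (dd a y)) + cm (dd a (dd a x)) (dd a y))
           + (cm (dd a (x + y)) (dd a (dd a (x + y))) - cm (dd a x) (dd a (dd a x)) - cm (dd a y) (dd a (dd a y)))"
      by (simp add: dd_add cm_def algebra_simps)
    then have "cm (dd a x) (dd a (dd a y)) + cm (dd a x) (dd a (dd a y)) = 0"
      using e1 C2' by simp
    then show "cm (dd a x) (dd a (dd a y)) = 0" by (rule tf)
  qed
  have L3: "\<And>x z y. dd a x * cm z (dd a (dd a y)) + cm x (dd a (dd a y)) * dd a z = 0"
  proof -
    fix x z y
    define s where "s = dd a (dd a y)"
    have "dd a x * cm z s + cm x s * dd a z = cm (dd a (x*z)) s - cm (dd a x) s * z - x * cm (dd a z) s"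
      by (simp add: dd_mult cm_def algebra_simps)
    then show "dd a x * cm z (dd a (dd a y)) + cm x (dd a (dd a y)) * dd a z = 0"
      using L2 unfolding s_def by simp
  qed
  have L5: "\<And>x y z. cm x (dd a (dd a y)) * dd a (dd a z) = 0"
  proof -
    fix x y z
    define s where "s = dd a (dd a y)"
    have ds: "s * a - a * s = 0" using d3[of y] by (simp add: s_def dd_def)
    have dzs: "cm (dd a z) s = 0" using L2 by (simp add: s_def)
    have l3a: "dd a x * cm z s + cm x s * dd a z = 0" using L3 by (simp add: s_def)
    have l3b: "dd a (x*a) * cm z s + cm (x*a) s * dd a z = 0" using L3 by (simp add: s_def)
    have "cm x s * dd a (dd a z) = (dd a x * cm z s + cm x s * dd a z) * a - (dd a (x*a) * cm z s + cm (x*a) s * dd a z)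
       - x * (s * a - a * s) * z * a - a * x * (s * a - a * s) * z + a * x * z * (s * a - a * s)
       + x * (s * a - a * s) * a * z + x * a * (s * a - a * s) * z - x * a * z * (s * a - a * s)
       + a * x * cm (dd a z) s - x * a * cm (dd a z) s"
      by (simp add: dd_def cm_def algebra_simps)
    then show "cm x (dd a (dd a y)) * dd a (dd a z) = 0"
      using ds dzs l3a l3b unfolding s_def[symmetric] by simp
  qed
  have d2: "\<And>y. dd a (dd a y) = 0"
  proof -
    fix y
    define s where "s = dd a (dd a y)"
    have ss: "s * s = 0" using s2 by (simp add: s_def)
    have "\<And>x. s * x * s = 0"
    proof -
      fix x
      have "s * x * s = x * (s * s) - cm x s * s" by (simp add: cm_def algebra_simps)
      then show "s * x * s = 0" using ss L5[of x y y] by (simp add: s_def)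
    qed
    then show "dd a (dd a y) = 0" using sp s_def by blast
  qed
  have pp: "\<And>x y. dd a x * dd a y = 0"
  proof -
    fix x y
    have "dd a x * dd a y + dd a x * dd a y = dd a (dd a (x*y)) - dd a (dd a x) * y - x * dd a (dd a y)"
      by (simp add: dd_def algebra_simps)
    then have "dd a x * dd a y + dd a x * dd a y = 0" using d2 by simp
    then show "dd a x * dd a y = 0" by (rule tf)
  qed
  have "\<And>z. dd a x * z * dd a x = 0"
  proof -
    fix z
    have "dd a x * z * dd a x = dd a x * dd a (z * x) - dd a x * dd a z * x"
      by (simp add: dd_mult algebra_simps)
    then show "dd a x * z * dd a x = 0" using pp by (simp add: mult.assoc)
  qed
  then have "dd a x = 0" by (rule sp)
  then show ?thesis by (simp add: dd_def)
qed


lemma anti_zero: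
  fixes u v :: "'a::ring"
  assumes sp: "\<And>u::'a. (\<And>x. u * x * u = 0) \<Longrightarrow> u = 0"
    and tf: "\<And>x::'a. x + x = 0 \<Longrightarrow> x = 0"
    and A: "\<And>z. u * z * v + v * z * u = 0"
  shows "u * x * v = 0"
proof -
  define s where "s = u * x * v"
  have "\<And>y. s * y * s = 0"
  proof -
    fix y :: 'a
    have "s * y * s + s * y * s = (u*x*v + v*x*u) * y * s - v * x * (u*(y*u*x)*v + v*(y*u*x)*u)
        + v * x * (u*y*v + v*y*u) * x * u - (u*x*v + v*x*u) * y * (v*x*u) + s * y * (u*x*v + v*x*u)"
      by (simp add: s_def algebra_simps)
    then have "s * y * s + s * y * s = 0" using A by simp
    then show "s * y * s = 0" by (rule tf)
  qed
  then have "s = 0" by (rule sp)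
  then show ?thesis by (simp add: s_def)
qed

lemma jordan_der:
  fixes D :: "'a::ring \<Rightarrow> 'a" and e :: 'a
  assumes sp: "\<And>u::'a. (\<And>x. u * x * u = 0) \<Longrightarrow> u = 0"
    and tf: "\<And>x::'a. x + x = 0 \<Longrightarrow> x = 0"
    and unitl: "\<And>x. e * x = x" and unitr: "\<And>x. x * e = x"
    and Dadd: "\<And>x y. D (x + y) = D x + D y"
    and jd: "\<And>x y. D (x * y + y * x) = D x * y + y * D x + x * D y + D y * x"
  shows "D (x * y) = D x * y + x * D y"
proof -
  have D0: "D 0 = 0" using Dadd[of 0 0] by simp
  have Dneg: "\<And>x. D (- x) = - D x" using Dadd D0 by (metis add.right_inverse add_eq_0_iff)
  have Ddiff: "\<And>x y. D (x - y) = D x - D y" using Dadd Dneg by (metis diff_conv_add_uminus)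
  have Dsq: "\<And>x. D (x * x) = D x * x + x * D x"
  proof -
    fix x :: 'a
    have "(D (x * x) - (D x * x + x * D x)) + (D (x * x) - (D x * x + x * D x))
        = D (x * x + x * x) - (D x * x + x * D x + x * D x + D x * x)"
      by (simp add: Dadd algebra_simps)
    also have "\<dots> = 0" using jd[of x x] by simp
    finally show "D (x * x) = D x * x + x * D x" using tf by (metis eq_iff_diff_eq_0)
  qed
  have H2: "\<And>x y. D (x * y * x) = D x * y * x + x * D y * x + x * y * D x"
  proof -
    fix x y :: 'a
    have w: "x * y * x + x * y * x = (x * (x * y + y * x) + (x * y + y * x) * x) - ((x * x) * y + y * (x * x))"
      by (simp add: algebra_simps)
    have "D (x * y * x) + D (x * y * x) = D (x * (x * y + y * x) + (x * y + y * x) * x) - D ((x * x) * y + y * (x * x))"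
      by (metis Dadd Ddiff w)
    also have "\<dots> = (D x * y * x + x * D y * x + x * y * D x) + (D x * y * x + x * D y * x + x * y * D x)"
      by (simp only: jd Dsq) (simp add: algebra_simps)
    finally have "(D (x * y * x) - (D x * y * x + x * D y * x + x * y * D x)) + (D (x * y * x) - (D x * y * x + x * D y * x + x * y * D x)) = 0"
      by (simp add: algebra_simps)
    then show "D (x * y * x) = D x * y * x + x * D y * x + x * y * D x" using tf by (metis eq_iff_diff_eq_0)
  qed
  have H3: "\<And>x y z. D (x * y * z + z * y * x) = D x * y * z + x * D y * z + x * y * D z + D z * y * x + z * D y * x + z * y * D x"
  proof -
    fix x y z :: 'a
    have w: "x * y * z + z * y * x = (x + z) * y * (x + z) - x * y * x - z * y * z"
      by (simp add: algebra_simps)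
    show "D (x * y * z + z * y * x) = D x * y * z + x * D y * z + x * y * D z + D z * y * x + z * D y * x + z * y * D x"
      unfolding w Ddiff H2 Dadd by (simp add: algebra_simps)
  qed
  define Dl where "Dl p q = D (p * q) - D p * q - p * D q" for p q
  have Dlsym: "\<And>p q. Dl q p = - Dl p q"
  proof -
    fix p q :: 'a
    have "Dl p q + Dl q p = D (p * q + q * p) - (D p * q + q * D p + p * D q + D q * p)"
      by (simp add: Dl_def Dadd algebra_simps)
    then have "Dl p q + Dl q p = 0" using jd by simp
    then show "Dl q p = - Dl p q" by (simp add: add_eq_0_iff)
  qed
  have H4: "\<And>p q x. Dl p q * x * (q * p - p * q) + (q * p - p * q) * x * Dl p q = 0"
  proof -
    fix p q x :: 'a
    define u where "u = Dl p q"
    have Dpq: "D (p * q) = u + D p * q + p * D q" by (simp add: u_def Dl_def)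
    have Dqp: "D (q * p) = - u + D q * p + q * D p" using Dlsym[of p q] by (simp add: u_def Dl_def algebra_simps)
    have w: "(p * q) * x * (q * p) + (q * p) * x * (p * q) = p * (q * x * q) * p + q * (p * x * p) * q"
      by (simp add: algebra_simps)
    have e1: "D ((p * q) * x * (q * p) + (q * p) * x * (p * q)) =
       D (p * q) * x * (q * p) + (p * q) * D x * (q * p) + (p * q) * x * D (q * p) + D (q * p) * x * (p * q) + (q * p) * D x * (p * q) + (q * p) * x * D (p * q)"
      by (rule H3)
    have e2: "D ((p * q) * x * (q * p) + (q * p) * x * (p * q)) =
       D p * (q * x * q) * p + p * (D q * x * q + q * D x * q + q * x * D q) * p + p * (q * x * q) * D p
     + (D q * (p * x * p) * q + q * (D p * x * p + p * D x * p + p * x * D p) * q + q * (p * x * p) * D q)"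
      unfolding w Dadd H2 by simp
    have "u * x * (q * p - p * q) + (q * p - p * q) * x * u =
       ((u + D p * q + p * D q) * x * (q * p) + (p * q) * D x * (q * p) + (p * q) * x * (- u + D q * p + q * D p) + (- u + D q * p + q * D p) * x * (p * q) + (q * p) * D x * (p * q) + (q * p) * x * (u + D p * q + p * D q))
     - (D p * (q * x * q) * p + p * (D q * x * q + q * D x * q + q * x * D q) * p + p * (q * x * q) * D p
     + (D q * (p * x * p) * q + q * (D p * x * p + p * D x * p + p * x * D p) * q + q * (p * x * p) * D q))"
      by (simp add: algebra_simps)
    also have "\<dots> = 0" using e1 e2 Dpq Dqp by simp
    finally show "Dl p q * x * (q * p - p * q) + (q * p - p * q) * x * Dl p q = 0" by (simp add: u_def)
  qed
  have P: "\<And>p q x. Dl p q * x * (q * p - p * q) = 0"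
    using anti_zero[OF sp tf] H4 by blast
  have Dladd1: "\<And>p c q. Dl (p + c) q = Dl p q + Dl c q"
    by (simp add: Dl_def Dadd algebra_simps)
  have Dladd2: "\<And>p q c. Dl p (q + c) = Dl p q + Dl p c"
    by (simp add: Dl_def Dadd algebra_simps)
  have Q: "\<And>p q c x. Dl p q * x * (q * c - c * q) = 0"
  proof -
    fix p q c x :: 'a
    have lin: "\<And>x. Dl p q * x * (q * c - c * q) + Dl c q * x * (q * p - p * q) = 0"
    proof -
      fix x :: 'a
      have "Dl p q * x * (q * c - c * q) + Dl c q * x * (q * p - p * q)
         = Dl (p + c) q * x * (q * (p + c) - (p + c) * q) - Dl p q * x * (q * p - p * q) - Dl c q * x * (q * c - c * q)"
        by (simp add: Dladd1 algebra_simps)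
      then show "Dl p q * x * (q * c - c * q) + Dl c q * x * (q * p - p * q) = 0" using P by simp
    qed
    define s where "s = Dl p q * x * (q * c - c * q)"
    have st: "Dl p q * x * (q * c - c * q) = - (Dl c q * x * (q * p - p * q))"
      using lin[of x] by (simp add: eq_neg_iff_add_eq_0)
    have "\<And>y. s * y * s = 0"
    proof -
      fix y :: 'a
      have "s * y * s = Dl p q * x * (q * c - c * q) * y * (- (Dl c q * x * (q * p - p * q)))"
        unfolding s_def by (simp only: st[symmetric])
      also have "\<dots> = - (Dl p q * (x * (q * c - c * q) * y * Dl c q * x) * (q * p - p * q))"
        by (simp add: mult.assoc)
      also have "\<dots> = 0" using P by simp
      finally show "s * y * s = 0" .
    qed
    then have "s = 0" by (rule sp)
    then show "Dl p q * x * (q * c - c * q) = 0" by (simp add: s_def)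
  qed
  have Q2: "\<And>p q c d x. Dl p q * x * (d * c - c * d) = 0"
  proof -
    fix p q c d x :: 'a
    have lin: "\<And>x. Dl p q * x * (d * c - c * d) + Dl p d * x * (q * c - c * q) = 0"
    proof -
      fix x :: 'a
      have "Dl p q * x * (d * c - c * d) + Dl p d * x * (q * c - c * q)
         = Dl p (q + d) * x * ((q + d) * c - c * (q + d)) - Dl p q * x * (q * c - c * q) - Dl p d * x * (d * c - c * d)"
        by (simp add: Dladd2 algebra_simps)
      then show "Dl p q * x * (d * c - c * d) + Dl p d * x * (q * c - c * q) = 0" using Q by simp
    qed
    define s where "s = Dl p q * x * (d * c - c * d)"
    have st: "Dl p q * x * (d * c - c * d) = - (Dl p d * x * (q * c - c * q))"
      using lin[of x] by (simp add: eq_neg_iff_add_eq_0)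
    have "\<And>y. s * y * s = 0"
    proof -
      fix y :: 'a
      have "s * y * s = Dl p q * x * (d * c - c * d) * y * (- (Dl p d * x * (q * c - c * q)))"
        unfolding s_def by (simp only: st[symmetric])
      also have "\<dots> = - (Dl p q * (x * (d * c - c * d) * y * Dl p d * x) * (q * c - c * q))"
        by (simp add: mult.assoc)
      also have "\<dots> = 0" using Q by simp
      finally show "s * y * s = 0" .
    qed
    then have "s = 0" by (rule sp)
    then show "Dl p q * x * (d * c - c * d) = 0" by (simp add: s_def)
  qed
  define u where "u = Dl x y"
  have uw: "\<And>z c d. u * z * (d * c - c * d) = 0" using Q2 by (simp add: u_def)
  have wu: "\<And>z c d. (d * c - c * d) * z * u = 0"
  proof -
    fix z c d :: 'a
    define w where "w = (d * c - c * d) * z * u"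
    have "\<And>y. w * y * w = 0"
    proof -
      fix y :: 'a
      have "w * y * w = (d * c - c * d) * z * (u * y * (d * c - c * d)) * z * u"
        by (simp add: w_def mult.assoc)
      then show "w * y * w = 0" using uw[of y d c] by simp
    qed
    then have "w = 0" by (rule sp)
    then show "(d * c - c * d) * z * u = 0" by (simp add: w_def)
  qed
  have uc: "\<And>z. u * z = z * u"
  proof -
    fix z :: 'a
    define w where "w = u * z - z * u"
    have "\<And>y. w * y * w = 0"
    proof -
      fix y :: 'a
      have "w * y * w = (w * y * u) * z - w * (y * z) * u" by (simp add: w_def algebra_simps)
      then show "w * y * w = 0" using wu[of u z y] wu[of u z "y * z"] by (simp add: w_def)
    qed
    then have "w = 0" by (rule sp)
    then show "u * z = z * u" by (simp add: w_def)
  qed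
  have uw0: "\<And>c d. u * (d * c - c * d) = 0" using uw[of e] unitr by (metis mult.assoc unitl)
  have wu0: "\<And>c d. (d * c - c * d) * u = 0" using wu[of _ _ e] by (metis mult.assoc unitl)
  have uuDw: "\<And>c d. u * u * D (d * c - c * d) = 0"
  proof -
    fix c d :: 'a
    define w where "w = d * c - c * d"
    have z: "D (u * w + w * u) = 0" using uw0 wu0 D0 by (simp add: w_def)
    have "u * u * D w + u * u * D w = u * (D u * w + w * D u + u * D w + D w * u) - u * D u * w - (u * w) * D u"
      using uc[of "D w"] by (simp add: algebra_simps)
    also have "\<dots> = 0 - u * D u * w - (u * w) * D u"
      using z jd by simp
    also have "\<dots> = 0"
      using uw[of "D u" d c] uw0[of d c] by (simp add: w_def mult.assoc)
    finally have "u * u * D w + u * u * D w = 0" .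
    then show "u * u * D (d * c - c * d) = 0" using tf w_def by blast
  qed
  have two_u: "u + u = D (x * y - y * x) - (D x * y - y * D x) - (x * D y - D y * x)"
  proof -
    have "u + u = u - Dl y x" using Dlsym[of x y] by (simp add: u_def)
    then show ?thesis by (simp add: u_def Dl_def Ddiff algebra_simps)
  qed
  have u3: "u * u * u = 0"
  proof -
    have "u * u * u + u * u * u = u * u * (u + u)" by (simp add: algebra_simps)
    also have "\<dots> = u * u * D (x * y - y * x) - u * (u * (D x * y - y * D x)) - u * (u * (x * D y - D y * x))"
      unfolding two_u by (simp add: algebra_simps)
    also have "\<dots> = 0" using uuDw[of x y] uw0[of "D x" y] uw0[of x "D y"] by simp
    finally show ?thesis using tf by blast
  qed
  have uu: "u * u = 0"
  proof (rule sp)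
    fix z :: 'a
    have "u * u * z * (u * u) = z * (u * (u * u * u))" using uc by (metis mult.assoc)
    then show "u * u * z * (u * u) = 0" using u3 by simp
  qed
  have "u = 0"
  proof (rule sp)
    fix z :: 'a
    show "u * z * u = 0" using uc uu by (metis mult.assoc mult_zero_right)
  qed
  then show ?thesis by (simp add: u_def Dl_def algebra_simps)
qed


lemma comm_central:
  fixes k :: "'a::ring"
  assumes sp: "\<And>u::'a. (\<And>x. u * x * u = 0) \<Longrightarrow> u = 0"
    and C: "\<And>x y. k * (x * y - y * x) = (x * y - y * x) * k"
  shows "k * x = x * k"
proof -
  have h1: "\<And>y. (x * y - y * x) * (k * x - x * k) = 0"
  proof -
    fix y :: 'a
    have "(x * y - y * x) * (k * x - x * k) = k * (x * (y * x) - (y * x) * x) - (x * (y * x) - (y * x) * x) * k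
          - (k * (x * y - y * x) - (x * y - y * x) * k) * x"
      by (simp add: algebra_simps)
    then show "(x * y - y * x) * (k * x - x * k) = 0" using C by simp
  qed
  have h2: "\<And>y z. (x * y - y * x) * z * (k * x - x * k) = 0"
  proof -
    fix y z :: 'a
    have "(x * y - y * x) * z * (k * x - x * k) = (x * (y * z) - (y * z) * x) * (k * x - x * k) - y * ((x * z - z * x) * (k * x - x * k))"
      by (simp add: algebra_simps)
    then show "(x * y - y * x) * z * (k * x - x * k) = 0" using h1 by simp
  qed
  have "\<And>z. (k * x - x * k) * z * (k * x - x * k) = 0"
  proof -
    fix z :: 'a
    have "(k * x - x * k) * z * (k * x - x * k) = - ((x * k - k * x) * z * (k * x - x * k))"
      by (simp add: algebra_simps)
    then show "(k * x - x * k) * z * (k * x - x * k) = 0" using h2[of k z] by simp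
  qed
  then have "k * x - x * k = 0" by (rule sp)
  then show ?thesis by simp
qed

lemma jc_comm: "jcirc x y = jcirc y (x::'a::ring)"
  by (simp add: jcirc_def add.commute)

lemma lin_add: "is_linear sc f \<Longrightarrow> f (x + y) = f x + f y"
  by (simp add: is_linear_def)
lemma lin_sc: "is_linear sc f \<Longrightarrow> f (sc c x) = sc c (f x)"
  by (simp add: is_linear_def)

theorem theorem2p3:
  fixes sc :: "'k::field \<Rightarrow> 'a::ring \<Rightarrow> 'a"
  assumes "is_algebra sc"
    and "unital TYPE('a)"
    and "semiprime TYPE('a)"
    and "(2::'k) \<noteq> 0"
  shows "GJDer sc = map_setsum (Cent sc) (Der sc)"
proof -
  note alg = assms(1) and two = assms(4)
  from assms(2) obtain e :: 'a where unitl: "\<And>x. e * x = x" and unitr: "\<And>x. x * e = x"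
    unfolding unital_def by blast
  have sp: "\<And>u::'a. (\<And>x. u * x * u = 0) \<Longrightarrow> u = 0"
    using assms(3) unfolding semiprime_def by blast
  have scadd: "\<And>c x y. sc c (x + y) = sc c x + sc c y"
    and scaddc: "\<And>c d x. sc (c + d) x = sc c x + sc d x"
    and scmul: "\<And>c d x. sc (c * d) x = sc c (sc d x)"
    and sc1: "\<And>x. sc 1 x = x"
    and scr: "\<And>c x y. sc c (x * y) = x * sc c y"
    using alg unfolding is_algebra_def by blast+
  have sc0: "\<And>c. sc c 0 = 0"
  proof -
    fix c :: 'k
    have "sc c 0 = sc c 0 + sc c 0" using scadd[of c 0 0] by simp
    then show "sc c 0 = 0" by simp
  qed
  have scdiff: "\<And>c x y. sc c (x - y) = sc c x - sc c y"
  proof -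
    fix c :: 'k and x y :: 'a
    have "sc c (x - y) + sc c y = sc c x" using scadd[of c "x - y" y] by simp
    then show "sc c (x - y) = sc c x - sc c y" by (simp add: eq_diff_eq)
  qed
  have tf: "\<And>x::'a. x + x = 0 \<Longrightarrow> x = 0"
  proof -
    fix x :: 'a
    assume x2: "x + x = 0"
    have "sc (1 + 1) x = x + x" by (simp only: scaddc sc1)
    then have "sc 2 x = x + x" by (simp only: one_add_one)
    then have s2: "sc 2 x = 0" using x2 by simp
    have i2: "inverse (2::'k) * 2 = 1" using two by simp
    have "x = sc (inverse 2 * 2) x" by (simp only: i2 sc1)
    also have "\<dots> = sc (inverse 2) (sc 2 x)" by (rule scmul)
    also have "\<dots> = 0" by (simp only: s2 sc0)
    finally show "x = 0" .
  qed
  show ?thesis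
  proof (rule set_eqI, rule iffI)
    fix f assume "f \<in> GJDer sc"
    then obtain g h where fl: "is_linear sc f" and gl: "is_linear sc g" and hl: "is_linear sc h"
      and E0: "\<And>x y. jcirc (f x) y + jcirc x (g y) = h (jcirc x y)"
      unfolding GJDer_def by blast
    have fadd: "\<And>x y. f (x + y) = f x + f y" using fl by (simp add: lin_add)
    have hadd: "\<And>x y. h (x + y) = h x + h y" using hl by (simp add: lin_add)
    define a where "a = f e"
    define b where "b = g e"
    have je: "\<And>z. jcirc z e = z + z" by (simp add: jcirc_def unitl unitr)
    have je2: "\<And>z. jcirc e z = z + z" by (simp add: jcirc_def unitl unitr)
    have h2: "\<And>x. f x + f x + jcirc x b = h x + h x"
      using E0[of _ e] unfolding je b_def hadd by simp
    have g2: "\<And>y. jcirc a y + (g y + g y) = h y + h y"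
      using E0[of e] by (simp add: je2 a_def hadd)
    have G: "\<And>y. g y + g y = f y + f y + jcirc y b - jcirc a y"
    proof -
      fix y
      have "g y + g y = (h y + h y) - jcirc a y" using g2[of y] by (metis add_diff_cancel_left')
      then show "g y + g y = f y + f y + jcirc y b - jcirc a y" using h2[of y] by simp
    qed
    have dbl: "\<And>x y. (jcirc (f x) y + jcirc x (g y)) + (jcirc (f x) y + jcirc x (g y))
                = jcirc (f x) y + jcirc (f x) y + jcirc x (f y + f y + jcirc y b - jcirc a y)"
    proof -
      fix x y
      have "(jcirc (f x) y + jcirc x (g y)) + (jcirc (f x) y + jcirc x (g y))
            = jcirc (f x) y + jcirc (f x) y + jcirc x (g y + g y)"
        by (simp add: jcirc_def algebra_simps)
      also have "\<dots> = jcirc (f x) y + jcirc (f x) y + jcirc x (f y + f y + jcirc y b - jcirc a y)"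
        by (simp only: G)
      finally show "(jcirc (f x) y + jcirc x (g y)) + (jcirc (f x) y + jcirc x (g y))
                = jcirc (f x) y + jcirc (f x) y + jcirc x (f y + f y + jcirc y b - jcirc a y)" .
    qed
    define k where "k = a - b"
    have kcomm: "\<And>x y. k * (x * y - y * x) = (x * y - y * x) * k"
    proof -
      fix x y
      have s: "jcirc (f x) y + jcirc x (g y) = jcirc (f y) x + jcirc y (g x)"
        using E0[of x y] E0[of y x] jc_comm[of x y] by simp
      have "k * (x * y - y * x) - (x * y - y * x) * k
          = (jcirc (f x) y + jcirc (f x) y + jcirc x (f y + f y + jcirc y b - jcirc a y))
          - (jcirc (f y) x + jcirc (f y) x + jcirc y (f x + f x + jcirc x b - jcirc a x))"
        by (simp add: k_def jcirc_def algebra_simps)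
      also have "\<dots> = 0" using s dbl[of x y] dbl[of y x] by simp
      finally show "k * (x * y - y * x) = (x * y - y * x) * k" by simp
    qed
    have kc: "\<And>z. k * z = z * k" using comm_central[OF sp kcomm] by blast
    define F where "F x = f x + f x" for x
    have Fadd: "\<And>u v. F (u + v) = F u + F v" by (simp add: F_def fadd algebra_simps)
    have Frel: "\<And>u v. F (jcirc u v) = jcirc (F u) v + jcirc u (F v) - jcirc (jcirc u v) a"
    proof -
      fix u v
      have e1: "F (jcirc u v) + jcirc (jcirc u v) b
          = jcirc (f u) v + jcirc (f u) v + jcirc u (f v + f v + jcirc v b - jcirc a v)"
        using dbl[of u v] E0[of u v] h2[of "jcirc u v"] by (simp add: F_def)
      have bk: "b = a - k" by (simp add: k_def)
      have e2: "jcirc (F u) v + jcirc u (F v) - jcirc (jcirc u v) a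
          = jcirc (f u) v + jcirc (f u) v + jcirc u (f v + f v + jcirc v b - jcirc a v) - jcirc (jcirc u v) b"
        by (simp add: F_def jcirc_def bk algebra_simps kc)
      have "F (jcirc u v) = jcirc (f u) v + jcirc (f u) v + jcirc u (f v + f v + jcirc v b - jcirc a v) - jcirc (jcirc u v) b"
        using e1 by (metis add_diff_cancel_right')
      then show "F (jcirc u v) = jcirc (F u) v + jcirc u (F v) - jcirc (jcirc u v) a"
        using e2 by simp
    qed
    have ac: "\<And>x. x * a = a * x" using a_central[OF sp tf Fadd Frel] by blast
    define D where "D x = f x - a * x" for x
    have Dadd: "\<And>x y. D (x + y) = D x + D y" by (simp add: D_def fadd algebra_simps)
    have Djd: "\<And>x y. D (x * y + y * x) = D x * y + y * D x + x * D y + D y * x"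
    proof -
      fix x y
      have c1: "y * (a * x) = a * (y * x)" using ac by (metis mult.assoc)
      have c2: "x * (a * y) = a * (x * y)" using ac by (metis mult.assoc)
      have c3: "x * (y * a) = a * (x * y)" using ac by (metis mult.assoc)
      have c4: "y * (x * a) = a * (y * x)" using ac by (metis mult.assoc)
      have "(D (x * y + y * x) - (D x * y + y * D x + x * D y + D y * x))
          + (D (x * y + y * x) - (D x * y + y * D x + x * D y + D y * x))
          = F (jcirc x y) - (jcirc (F x) y + jcirc x (F y) - jcirc (jcirc x y) a)"
        by (simp add: D_def F_def jcirc_def fadd algebra_simps c1 c2 c3 c4)
      also have "\<dots> = 0" using Frel by simp
      finally have "(D (x * y + y * x) - (D x * y + y * D x + x * D y + D y * x))
          + (D (x * y + y * x) - (D x * y + y * D x + x * D y + D y * x)) = 0" .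
      then have "D (x * y + y * x) - (D x * y + y * D x + x * D y + D y * x) = 0" by (rule tf)
      then show "D (x * y + y * x) = D x * y + y * D x + x * D y + D y * x" by simp
    qed
    have Dder: "\<And>x y. D (x * y) = D x * y + x * D y"
      using jordan_der[OF sp tf unitl unitr Dadd Djd] by blast
    have cent: "(\<lambda>x. a * x) \<in> Cent sc"
      unfolding Cent_def is_linear_def
    proof (intro CollectI conjI allI)
      show "\<And>x y. a * (x + y) = a * x + a * y" by (simp add: algebra_simps)
      show "\<And>c x. a * sc c x = sc c (a * x)" using scr by simp
      show "\<And>x y. a * (x * y) = a * x * y" by (simp add: mult.assoc)
      show "\<And>x y. a * (x * y) = x * (a * y)" using ac by (metis mult.assoc)
    qed
    have der: "D \<in> Der sc"
      unfolding Der_def is_linear_def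
    proof (intro CollectI conjI allI)
      show "\<And>x y. D (x + y) = D x + D y" by (rule Dadd)
      show "\<And>c x. D (sc c x) = sc c (D x)"
        using fl scr scdiff by (simp add: D_def is_linear_def)
      show "\<And>x y. D (x * y) = D x * y + x * D y" by (rule Dder)
    qed
    have "f = (\<lambda>x. a * x + D x)" by (simp add: D_def fun_eq_iff)
    then show "f \<in> map_setsum (Cent sc) (Der sc)"
      unfolding map_setsum_def using cent der by blast
  next
    fix f assume "f \<in> map_setsum (Cent sc) (Der sc)"
    then obtain c d where fdef: "f = (\<lambda>x. c x + d x)" and cc: "c \<in> Cent sc" and dd: "d \<in> Der sc"
      unfolding map_setsum_def by blast
    have cl: "is_linear sc c" and cm1: "\<And>x y. c (x * y) = c x * y" and cm2: "\<And>x y. c (x * y) = x * c y"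
      using cc unfolding Cent_def by blast+
    have dl: "is_linear sc d" and dm: "\<And>x y. d (x * y) = d x * y + x * d y"
      using dd unfolding Der_def by blast+
    have lf: "is_linear sc f"
      using cl dl unfolding fdef is_linear_def by (simp add: scadd algebra_simps)
    have "jcirc (f x) y + jcirc x (d y) = f (jcirc x y)" for x y
    proof -
      have "c (y * x) = y * c x" by (rule cm2)
      then show ?thesis using cl dl cm1[of x y] dm[of x y] dm[of y x]
        unfolding fdef jcirc_def is_linear_def by (simp add: algebra_simps)
    qed
    then show "f \<in> GJDer sc"
      unfolding GJDer_def using lf dl by blast
  qed
qed
end
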